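(* For all $n,m\ge1$, $$F_n(x,y,q)F_{n+m-1}(xq,yq,q)-F_{n-1}(xq,yq,q)F_{n+m}(x,y,q)=(-y)^nq^{\binom n2}F_{m-1}(xq^{n+1},yq^{n+1},q).$$
   Context: $F_n(x,y,q)=\sum_{\pi}x^{s(\pi)}y^{d(\pi)}q^{rb(\pi)}$, where: - $\pi$ ranges over layered matchings of $[n]$, i.e. set partitions whose blocks are consecutive intervals $[1,i_1]/\dots/[i_{k-1}+1,n]$ of size $1$ or $2$; - $s(\pi)$ and $d(\pi)$ are the numbers of blocks of size $1$ and $2$; - for $\pi=B_1/\dots/B_k$ with $\min B_1<\dots<\min B_k$, $rb(\pi)$ is the number of pairs $(b,B_j)$ with $b\in B_i$, $j>i$, $\max B_j>b$. Equivalently, $F_0=1$, $F_1=x$, and $F_n=xq^{n-1}F_{n-1}+yq^{n-2}F_{n-2}$ for $n\ge2$. $F_n(xq^a,yq^a,q)$ denotes the substitution $x\mapsto xq^a$, $y\mapsto yq^a$. *)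

theory Defs
  imports Main
begin

fun F :: "nat \<Rightarrow> 'a::comm_ring_1 \<Rightarrow> 'a \<Rightarrow> 'a \<Rightarrow> 'a" where
  "F 0 x y q = 1"
| "F (Suc 0) x y q = x"
| "F (Suc (Suc n)) x y q = x * q ^ (Suc n) * F (Suc n) x y q + y * q ^ n * F n x y q"

end

theory Submission
  imports Defs
begin

lemma fwd_aux:
  fixes x y q :: "'a::comm_ring_1"
  shows "(\<forall>x y. F (Suc (Suc k)) x y q = x * F (Suc k) (x*q) (y*q) q + y * F k (x*q*q) (y*q*q) q)
       \<and> (\<forall>x y. F (Suc (Suc (Suc k))) x y q = x * F (Suc (Suc k)) (x*q) (y*q) q + y * F (Suc k) (x*q*q) (y*q*q) q)"
proof (induction k)
  case 0
  then show ?case by (simp add: algebra_simps power2_eq_square)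
next
  case (Suc k)
  have A: "\<forall>x y. F (Suc (Suc (Suc k))) x y q = x * F (Suc (Suc k)) (x*q) (y*q) q + y * F (Suc k) (x*q*q) (y*q*q) q"
    using Suc by blast
  have B: "\<forall>x y. F (Suc (Suc k)) x y q = x * F (Suc k) (x*q) (y*q) q + y * F k (x*q*q) (y*q*q) q"
    using Suc by blast
  have "F (Suc (Suc (Suc (Suc k)))) x y q = x * F (Suc (Suc (Suc k))) (x*q) (y*q) q + y * F (Suc (Suc k)) (x*q*q) (y*q*q) q" for x y
  proof -
    have "F (Suc (Suc (Suc (Suc k)))) x y q = x * q ^ Suc (Suc (Suc k)) * F (Suc (Suc (Suc k))) x y q + y * q ^ Suc (Suc k) * F (Suc (Suc k)) x y q"
      by simp
    also have "\<dots> = x * q ^ Suc (Suc (Suc k)) * (x * F (Suc (Suc k)) (x*q) (y*q) q + y * F (Suc k) (x*q*q) (y*q*q) q)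
        + y * q ^ Suc (Suc k) * (x * F (Suc k) (x*q) (y*q) q + y * F k (x*q*q) (y*q*q) q)"
      using A B by simp
    also have "\<dots> = x * (x * q * q ^ Suc (Suc k) * F (Suc (Suc k)) (x*q) (y*q) q + y * q * q ^ Suc k * F (Suc k) (x*q) (y*q) q)
        + y * (x * q * q * q ^ Suc k * F (Suc k) (x*q*q) (y*q*q) q + y * q * q * q ^ k * F k (x*q*q) (y*q*q) q)"
      by (simp add: algebra_simps)
    also have "\<dots> = x * F (Suc (Suc (Suc k))) (x*q) (y*q) q + y * F (Suc (Suc k)) (x*q*q) (y*q*q) q"
      by simp
    finally show ?thesis by (simp add: algebra_simps)
  qed
  then show ?case using A by blast
qed

lemma fwd:
  fixes x y q :: "'a::comm_ring_1"
  shows "F (Suc (Suc k)) x y q = x * F (Suc k) (x*q) (y*q) q + y * F k (x*q*q) (y*q*q) q"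
  using fwd_aux[of k q] by blast

lemma main:
  fixes x y q :: "'a::comm_ring_1"
  shows "F (Suc k) x y q * F (k + Suc j) (x * q) (y * q) q
           - F k (x * q) (y * q) q * F (Suc k + Suc j) x y q
         = (- y) ^ Suc k * q ^ (Suc k choose 2) * F j (x * q ^ (Suc k + 1)) (y * q ^ (Suc k + 1)) q"
proof (induction k arbitrary: x y)
  case 0
  show ?case using fwd[of j x y q] by (simp add: algebra_simps power2_eq_square choose_two)
next
  case (Suc k)
  have IH: "F (Suc k) (x*q) (y*q) q * F (k + Suc j) (x*q*q) (y*q*q) q
           - F k (x*q*q) (y*q*q) q * F (Suc k + Suc j) (x*q) (y*q) q
         = (- (y*q)) ^ Suc k * q ^ (Suc k choose 2) * F j (x*q * q ^ (Suc k + 1)) (y*q * q ^ (Suc k + 1)) q"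
    using Suc.IH[of "x*q" "y*q"] by simp
  have e1: "F (Suc (Suc k)) x y q = x * F (Suc k) (x*q) (y*q) q + y * F k (x*q*q) (y*q*q) q"
    by (rule fwd)
  have e2: "F (Suc (Suc k) + Suc j) x y q = x * F (Suc k + Suc j) (x*q) (y*q) q + y * F (k + Suc j) (x*q*q) (y*q*q) q"
    using fwd[of "k + Suc j" x y q] by simp
  have c: "(Suc (Suc k) choose 2) = Suc k + (Suc k choose 2)"
    by (simp add: choose_two)
  have xs: "x*q * q ^ (Suc k + 1) = x * q ^ (Suc (Suc k) + 1)" "y*q * q ^ (Suc k + 1) = y * q ^ (Suc (Suc k) + 1)"
    by (simp_all add: algebra_simps)
  have "F (Suc (Suc k)) x y q * F (Suc k + Suc j) (x * q) (y * q) q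
           - F (Suc k) (x * q) (y * q) q * F (Suc (Suc k) + Suc j) x y q
       = - y * (F (Suc k) (x*q) (y*q) q * F (k + Suc j) (x*q*q) (y*q*q) q
           - F k (x*q*q) (y*q*q) q * F (Suc k + Suc j) (x*q) (y*q) q)"
    unfolding e1 e2 by (simp add: algebra_simps)
  also have "\<dots> = - y * ((- (y*q)) ^ Suc k * q ^ (Suc k choose 2) * F j (x * q ^ (Suc (Suc k) + 1)) (y * q ^ (Suc (Suc k) + 1)) q)"
    using IH[unfolded xs] by (rule arg_cong)
  also have "\<dots> = (- y) ^ Suc (Suc k) * q ^ (Suc (Suc k) choose 2) * F j (x * q ^ (Suc (Suc k) + 1)) (y * q ^ (Suc (Suc k) + 1)) q"
    proof -
      have p: "(- (y*q)) ^ Suc k = q ^ Suc k * (- y) ^ Suc k"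
        by (metis mult.commute mult_minus_left power_mult_distrib)
      show ?thesis unfolding c p by (simp add: power_add algebra_simps)
    qed
  finally show ?case by simp
qed

theorem corollary5p5:
  fixes x y q :: "'a::comm_ring_1" and n m :: nat
  assumes "n \<ge> 1" and "m \<ge> 1"
  shows "F n x y q * F (n + m - 1) (x * q) (y * q) q
           - F (n - 1) (x * q) (y * q) q * F (n + m) x y q
         = (- y) ^ n * q ^ (n choose 2) * F (m - 1) (x * q ^ (n + 1)) (y * q ^ (n + 1)) q"
proof -
  obtain k where k: "n = Suc k" using assms(1) by (cases n) auto
  obtain j where j: "m = Suc j" using assms(2) by (cases m) auto
  show ?thesis using main[of k x y q j] unfolding k j by simp
qed

end
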